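(* Let $p(\cdot)\in\mathcal{P}^{\log}(\mathbb{R}^n)$ with $0<p_-\le p_+<\infty$ and $p_\infty=p_-$, and let $s>1/p_-$. If $\omega$ is a weight with $\omega(x)\lesssim(1+|x|)^\gamma$ for some $\gamma\in\mathbb{R}$ and $\omega^{1/s}\in RH_{sp_+}$, then for every cube $Q$, \[ \|\chi_Q\|_{L^{p(\cdot)}_\omega}\approx\begin{cases}\left[\int_Q\omega(x)^{p_-}dx\right]^{1/p_-}, & \text{if } \ell(Q)>1,\\[1ex] \left[\int_Q\omega(x)^{p_-(Q)}dx\right]^{1/p_-(Q)}, & \text{if } \ell(Q)\le1,\end{cases} \] with implicit constants independent of $Q$.
   Context: $\ell(Q)$ is the side length of $Q$; $p_-(Q)=\operatorname{ess\,inf}_{x\in Q}p(x)$, $p_-=p_-(\mathbb{R}^n)$, $p_+=\operatorname{ess\,sup}p$. $p(\cdot)\in\mathcal{P}^{\log}(\mathbb{R}^n)$ means $0<p_-\le p_+<\infty$ and there are $C,C_\infty>0$ and $p_-\le p_\infty\le p_+$ with $|p(x)-p(y)|\le C/(-\log|x-y|)$ for $|x-y|\le1/2$ and $|p(x)-p_\infty|\le C_\infty/\log(e+|x|)$. A weight is a locally integrable $\omega$ with $0<\omega<\infty$ a.e.; $\|f\|_{L^{p(\cdot)}_\omega}:=\|f\omega\|_{L^{p(\cdot)}}$ with $\|g\|_{L^{p(\cdot)}}=\inf\{\lambda>0:\int|g/\lambda|^{p(x)}dx\le1\}$. $\omega\in RH_t$ ($t>1$) means there is $C>0$ with $\left(\frac1{|Q|}\int_Q\omega^t\right)^{1/t}\le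 C\frac1{|Q|}\int_Q\omega$ for every cube $Q$. *)

theory Defs
  imports "HOL-Analysis.Analysis"
begin

definition cube :: "'a::euclidean_space \<Rightarrow> real \<Rightarrow> 'a set" where
  "cube a l = cbox a (a + l *\<^sub>R One)"

definition ess_inf_on :: "('a::euclidean_space \<Rightarrow> real) \<Rightarrow> 'a set \<Rightarrow> real" where
  "ess_inf_on p Q = Sup {c. AE x in lborel. x \<in> Q \<longrightarrow> c \<le> p x}"

definition ess_sup_all :: "('a::euclidean_space \<Rightarrow> real) \<Rightarrow> real" where
  "ess_sup_all p = Inf {c. AE x in lborel. p x \<le> c}"

abbreviation p_minus :: "('a::euclidean_space \<Rightarrow> real) \<Rightarrow> real" where
  "p_minus p \<equiv> ess_inf_on p UNIV"

abbreviation p_plus :: "('a::euclidean_space \<Rightarrow> real) \<Rightarrow> real" where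
  "p_plus p \<equiv> ess_sup_all p"

definition P_log_with :: "('a::euclidean_space \<Rightarrow> real) \<Rightarrow> real \<Rightarrow> bool" where
  "P_log_with p pinf \<longleftrightarrow>
     p \<in> borel_measurable lborel \<and>
     (\<exists>m>0. AE x in lborel. m \<le> p x) \<and> (\<exists>M. AE x in lborel. p x \<le> M) \<and>
     0 < p_minus p \<and> p_minus p \<le> p_plus p \<and>
     p_minus p \<le> pinf \<and> pinf \<le> p_plus p \<and>
     (\<exists>C>0. \<forall>x y. x \<noteq> y \<and> dist x y \<le> 1/2 \<longrightarrow> \<bar>p x - p y\<bar> \<le> C / (- ln (dist x y))) \<and>
     (\<exists>Cinf>0. \<forall>x. \<bar>p x - pinf\<bar> \<le> Cinf / ln (exp 1 + norm x))"

text \<open>Weight: locally integrable, 0 < w < \<infinity> a.e. (w real-valued, hence finite).\<close>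
definition weight :: "('a::euclidean_space \<Rightarrow> real) \<Rightarrow> bool" where
  "weight w \<longleftrightarrow> w \<in> borel_measurable lborel \<and> (AE x in lborel. 0 < w x) \<and>
     (\<forall>K. compact K \<longrightarrow> set_integrable lborel K w)"

definition lp_norm :: "('a::euclidean_space \<Rightarrow> real) \<Rightarrow> ('a \<Rightarrow> real) \<Rightarrow> real" where
  "lp_norm p g = Inf {r::real. r > 0 \<and>
      (\<integral>\<^sup>+ x. ennreal ((\<bar>g x\<bar> / r) powr p x) \<partial>lborel) \<le> 1}"

definition lp_w_norm :: "('a::euclidean_space \<Rightarrow> real) \<Rightarrow> ('a \<Rightarrow> real) \<Rightarrow> ('a \<Rightarrow> real) \<Rightarrow> real" where
  "lp_w_norm p w f = lp_norm p (\<lambda>x. f x * w x)"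

definition RH :: "real \<Rightarrow> ('a::euclidean_space \<Rightarrow> real) \<Rightarrow> bool" where
  "RH t w \<longleftrightarrow> (\<exists>C>0. \<forall>a l. l > 0 \<longrightarrow>
      set_integrable lborel (cube a l) (\<lambda>x. w x powr t) \<and>
      ((\<integral>x\<in>cube a l. w x powr t \<partial>lborel) / measure lborel (cube a l)) powr (1/t)
        \<le> C * ((\<integral>x\<in>cube a l. w x \<partial>lborel) / measure lborel (cube a l)))"

end

theory Submission
  imports Defs "HOL-Probability.Sinc_Integral"
begin

lemma ae_not_null:
  assumes "Q \<in> sets lborel" "emeasure lborel Q \<noteq> 0" "AE x in lborel. x \<in> Q \<longrightarrow> P"
  shows P
proof (rule ccontr)
  assume "\<not> P"
  then have "AE x in lborel. x \<notin> Q" using assms(3) by auto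
  then have "emeasure lborel Q = 0" using assms(1) AE_iff_measurable[of "{x. x \<in> Q}" lborel "\<lambda>x. x \<notin> Q"]
    by auto
  then show False using assms(2) by simp
qed

lemma cube_sets[measurable]: "cube a l \<in> sets lborel"
  unfolding cube_def by simp

lemma cube_emeasure:
  fixes a :: "'a::euclidean_space"
  assumes "0 \<le> l" shows "emeasure lborel (cube a l) = ennreal (l ^ DIM('a))"
  unfolding cube_def using assms
  by (subst emeasure_lborel_cbox) (auto simp: inner_simps prod_constant)

lemma cube_measure:
  fixes a :: "'a::euclidean_space"
  assumes "0 \<le> l" shows "measure lborel (cube a l) = l ^ DIM('a)"
  using cube_emeasure[OF assms, of a] assms by (simp add: measure_def)

lemma cube_dist:
  fixes a :: "'a::euclidean_space" and l :: real
  assumes "x \<in> cube a (l::real)" "y \<in> cube a l"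
  shows "dist x y \<le> DIM('a) * l"
proof -
  have b: "\<bar>(x - y) \<bullet> b\<bar> \<le> l" if "b \<in> Basis" for b
  proof -
    have "a \<bullet> b \<le> x \<bullet> b \<and> x \<bullet> b \<le> a \<bullet> b + l" "a \<bullet> b \<le> y \<bullet> b \<and> y \<bullet> b \<le> a \<bullet> b + l"
      using assms that by (auto simp: cube_def mem_box inner_simps)
    then show ?thesis by (auto simp: inner_simps)
  qed
  have "dist x y = norm (x - y)" by (simp add: dist_norm)
  also have "\<dots> \<le> (\<Sum>b\<in>Basis. \<bar>(x - y) \<bullet> b\<bar>)" by (rule norm_le_l1)
  also have "\<dots> \<le> (\<Sum>b\<in>(Basis::'a set). l)" by (rule sum_mono) (use b in auto)
  finally show ?thesis by simp
qed

lemma essinf_props: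
  fixes p :: "'a::euclidean_space \<Rightarrow> real"
  assumes Q: "Q \<in> sets lborel" "emeasure lborel Q \<noteq> 0"
    and m: "AE x in lborel. m \<le> p x" and M: "AE x in lborel. p x \<le> M"
  shows "AE x in lborel. x \<in> Q \<longrightarrow> ess_inf_on p Q \<le> p x"
    and "\<And>c. (AE x in lborel. x \<in> Q \<longrightarrow> c \<le> p x) \<Longrightarrow> c \<le> ess_inf_on p Q"
    and "ess_inf_on p Q \<le> M"
proof -
  let ?S = "{c. AE x in lborel. x \<in> Q \<longrightarrow> c \<le> p x}"
  have ne: "m \<in> ?S" using m by auto
  have bd: "c \<le> M" if "c \<in> ?S" for c
  proof -
    from that have "AE x in lborel. x \<in> Q \<longrightarrow> c \<le> p x" by simp
    with M have "AE x in lborel. x \<in> Q \<longrightarrow> c \<le> M" by eventually_elim auto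
    then show ?thesis using ae_not_null[OF Q] by blast
  qed
  then have bdd: "bdd_above ?S" unfolding bdd_above_def by blast
  show lo: "c \<le> ess_inf_on p Q" if "AE x in lborel. x \<in> Q \<longrightarrow> c \<le> p x" for c
    unfolding ess_inf_on_def using that bdd by (intro cSup_upper) auto
  show "ess_inf_on p Q \<le> M"
    unfolding ess_inf_on_def using ne bd by (intro cSup_least) auto
  have "\<forall>k::nat. AE x in lborel. x \<in> Q \<longrightarrow> ess_inf_on p Q - 1/(Suc k) \<le> p x"
  proof
    fix k :: nat
    have "ess_inf_on p Q - 1/(Suc k) < Sup ?S" unfolding ess_inf_on_def by simp
    have neS: "?S \<noteq> {}" using ne by blast
    have "\<exists>c\<in>?S. ess_inf_on p Q - 1/(Suc k) < c"
      by (rule less_cSup_iff[OF neS bdd, THEN iffD1]) fact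
    then obtain c where c: "c \<in> ?S" "ess_inf_on p Q - 1/(Suc k) < c" by blast
    then show "AE x in lborel. x \<in> Q \<longrightarrow> ess_inf_on p Q - 1/(Suc k) \<le> p x" by auto
  qed
  then have "AE x in lborel. \<forall>k::nat. x \<in> Q \<longrightarrow> ess_inf_on p Q - 1/(Suc k) \<le> p x"
    by (rule AE_all_countable[THEN iffD2])
  then show "AE x in lborel. x \<in> Q \<longrightarrow> ess_inf_on p Q \<le> p x"
  proof (rule AE_mp, intro AE_I2 impI)
    fix x assume h: "\<forall>k::nat. x \<in> Q \<longrightarrow> ess_inf_on p Q - 1/(Suc k) \<le> p x" "x \<in> Q"
    show "ess_inf_on p Q \<le> p x"
    proof (rule field_le_epsilon)
      fix e :: real assume "0 < e"
      then obtain k :: nat where "1/(Suc k) < e"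
        by (metis nat_approx_posE)
      moreover have "ess_inf_on p Q - 1/(Suc k) \<le> p x" using h by blast
      ultimately show "ess_inf_on p Q \<le> p x + e" by linarith
    qed
  qed
qed

lemma esssup_props:
  fixes p :: "'a::euclidean_space \<Rightarrow> real"
  assumes m: "AE x in lborel. m \<le> p x" and M: "AE x in lborel. p x \<le> M"
  shows "AE x in lborel. p x \<le> ess_sup_all p"
proof -
  let ?S = "{c. AE x in lborel. p x \<le> c}"
  have ne: "M \<in> ?S" using M by auto
  have bd: "m \<le> c" if "c \<in> ?S" for c
  proof -
    from that have "AE x in lborel. p x \<le> c" by simp
    with m have "AE x in lborel. m \<le> p x \<and> p x \<le> c" by (rule AE_conjI)
    then have "AE (x::'a) in lborel. x \<in> UNIV \<longrightarrow> m \<le> c"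
      by (rule eventually_mono) (metis UNIV_I order_trans)
    moreover have E: "emeasure lborel (UNIV::'a set) \<noteq> 0" by simp
    moreover have U: "UNIV \<in> sets (lborel::'a measure)" by simp
    ultimately show ?thesis using ae_not_null[OF U E] by blast
  qed
  then have bdd: "bdd_below ?S" unfolding bdd_below_def by blast
  have "\<forall>k::nat. AE x in lborel. p x \<le> ess_sup_all p + 1/(Suc k)"
  proof
    fix k :: nat
    have "Inf ?S < ess_sup_all p + 1/(Suc k)" unfolding ess_sup_all_def by simp
    have neS: "?S \<noteq> {}" using ne by blast
    have "\<exists>c\<in>?S. c < ess_sup_all p + 1/(Suc k)"
      by (rule cInf_less_iff[OF neS bdd, THEN iffD1]) fact
    then obtain c where c: "c \<in> ?S" "c < ess_sup_all p + 1/(Suc k)" by blast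
    then show "AE x in lborel. p x \<le> ess_sup_all p + 1/(Suc k)" by auto
  qed
  then have "AE x in lborel. \<forall>k::nat. p x \<le> ess_sup_all p + 1/(Suc k)"
    by (rule AE_all_countable[THEN iffD2])
  then show ?thesis
  proof (rule AE_mp, intro AE_I2 impI)
    fix x assume h: "\<forall>k::nat. p x \<le> ess_sup_all p + 1/(Suc k)"
    show "p x \<le> ess_sup_all p"
    proof (rule field_le_epsilon)
      fix e :: real assume "0 < e"
      then obtain k :: nat where "1/(Suc k) < e"
        by (metis nat_approx_posE)
      moreover have "p x \<le> ess_sup_all p + 1/(Suc k)" using h by blast
      ultimately show "p x \<le> ess_sup_all p + e" by linarith
    qed
  qed
qed

lemma power_mean:
  fixes f :: "'a::euclidean_space \<Rightarrow> real" and Q :: "'a set"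
  assumes Q: "Q \<in> sets lborel" "emeasure lborel Q < \<infinity>" "0 < measure lborel Q"
    and f: "f \<in> borel_measurable lborel" "\<And>x. 0 \<le> f x"
    and ab: "0 < a" "a \<le> b"
    and int: "set_integrable lborel Q (\<lambda>x. f x powr b)"
  shows "set_integrable lborel Q (\<lambda>x. f x powr a)"
    and "(\<integral>x\<in>Q. f x powr a \<partial>lborel) / measure lborel Q
          \<le> ((\<integral>x\<in>Q. f x powr b \<partial>lborel) / measure lborel Q) powr (a/b)"
proof -
  define \<mu> where "\<mu> = measure lborel Q"
  define I where "I = (\<integral>x\<in>Q. f x powr b \<partial>lborel)"
  define \<theta> where "\<theta> = a / b"
  have b0: "0 < b" using ab by simp
  have th: "0 < \<theta>" "\<theta> \<le> 1" using ab by (auto simp: \<theta>_def)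
  have mu: "0 < \<mu>" using Q by (simp add: \<mu>_def)
  have intc: "set_integrable lborel Q (\<lambda>_. 1::real)"
    unfolding set_integrable_def using Q by simp
  have intk: "set_integrable lborel Q (\<lambda>_. c)" for c :: real
    using set_integrable_mult_right[of c lborel Q "\<lambda>_. 1::real", OF intc] by simp
  have intsum: "set_integrable lborel Q (\<lambda>x. 1 + f x powr b)"
    using intc int by (rule set_integral_add)
  have bnd: "f x powr a \<le> 1 + f x powr b" for x
  proof (cases "f x \<le> 1")
    case True
    then have "f x powr a \<le> 1" using f(2)[of x] ab by (intro powr_le1) auto
    then show ?thesis by (smt (verit) powr_ge_zero)
  next
    case False
    then have "f x powr a \<le> f x powr b" using ab by (intro powr_mono) auto
    then show ?thesis by simp
  qed
  note f(1)[measurable]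
  have meas: "set_borel_measurable lborel Q (\<lambda>x. f x powr a)"
    unfolding set_borel_measurable_def using Q(1) by measurable
  have bnd2: "AE x in lborel. x \<in> Q \<longrightarrow> norm (f x powr a) \<le> norm (1 + f x powr b)"
  proof (intro AE_I2 impI)
    fix x
    have "0 \<le> f x powr b" by simp
    then show "norm (f x powr a) \<le> norm (1 + f x powr b)" using bnd[of x] by simp
  qed
  show inta: "set_integrable lborel Q (\<lambda>x. f x powr a)"
    by (rule set_integrable_bound[OF intsum meas bnd2])
  have I0: "0 \<le> I" unfolding I_def set_lebesgue_integral_def
    by (intro integral_nonneg_AE AE_I2) auto
  show "(\<integral>x\<in>Q. f x powr a \<partial>lborel) / measure lborel Q
          \<le> ((\<integral>x\<in>Q. f x powr b \<partial>lborel) / measure lborel Q) powr (a/b)"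
  proof (cases "I = 0")
    case True
    have "AE x in lborel. indicator Q x *\<^sub>R f x powr b = 0"
      using True int unfolding I_def set_lebesgue_integral_def set_integrable_def
      by (subst integral_nonneg_eq_0_iff_AE[symmetric]) auto
    then have "AE x in lborel. indicator Q x *\<^sub>R f x powr a = 0"
      by eventually_elim (auto simp: indicator_def split: if_splits)
    then have "(\<integral>x\<in>Q. f x powr a \<partial>lborel) = 0"
      unfolding set_lebesgue_integral_def by (rule integral_eq_zero_AE)
    then show ?thesis by simp
  next
    case False
    then have I1: "0 < I" using I0 by simp
    define K where "K = I powr (-\<theta>) * \<mu> powr (\<theta> - 1)"
    have K0: "0 < K" using I1 mu by (simp add: K_def)
    have inv: "inverse (\<mu> powr (\<theta> - 1)) = \<mu> powr (1 - \<theta>)"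
      by (metis minus_diff_eq powr_minus)
    have pw: "f x powr a * K \<le> \<theta> / I * f x powr b + (1 - \<theta>) / \<mu>" for x
    proof (cases "f x = 0")
      case True
      then show ?thesis using th I1 mu ab by simp
    next
      case False
      then have fx: "0 < f x" using f(2)[of x] by simp
      have "(f x powr b / I) powr \<theta> * (1/\<mu>) powr (1 - \<theta>) \<le> \<theta> * (f x powr b / I) + (1 - \<theta>) * (1/\<mu>)"
        using th fx I1 mu by (intro Youngs_inequality_0) auto
      moreover have "(f x powr b / I) powr \<theta> = f x powr a * I powr (-\<theta>)"
      proof -
        have "(f x powr b / I) powr \<theta> = (f x powr b) powr \<theta> / I powr \<theta>"
          using fx I1 by (simp add: powr_divide)
        also have "(f x powr b) powr \<theta> = f x powr a"
          using b0 by (simp add: powr_powr \<theta>_def)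
        finally show ?thesis by (simp add: powr_minus_divide)
      qed
      moreover have "(1/\<mu>) powr (1 - \<theta>) = \<mu> powr (\<theta> - 1)"
        using mu by (simp add: powr_divide powr_minus_divide[symmetric])
      ultimately show ?thesis by (simp add: K_def mult.assoc)
    qed
    have "(\<integral>x\<in>Q. f x powr a * K \<partial>lborel) \<le> (\<integral>x\<in>Q. \<theta> / I * f x powr b + (1 - \<theta>) / \<mu> \<partial>lborel)"
      using inta int intk pw
      by (intro set_integral_mono) (auto intro!: set_integral_add)
    also have "\<dots> = \<theta> / I * I + (1 - \<theta>) / \<mu> * \<mu>"
      using int intk Q by (subst set_integral_add) (auto simp: I_def \<mu>_def set_integral_const field_simps)
    also have "\<dots> = 1" using I1 mu by simp
    finally have "(\<integral>x\<in>Q. f x powr a \<partial>lborel) * K \<le> 1" by simp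
    then have "(\<integral>x\<in>Q. f x powr a \<partial>lborel) \<le> 1 / K" using K0 by (simp add: field_simps)
    also have "1 / K = I powr \<theta> * \<mu> powr (1 - \<theta>)"
      using inv by (simp add: K_def powr_minus divide_inverse powr_minus_divide)
    finally have "(\<integral>x\<in>Q. f x powr a \<partial>lborel) / \<mu> \<le> I powr \<theta> * \<mu> powr (1 - \<theta>) / \<mu>"
      using mu by (intro divide_right_mono) auto
    also have "\<dots> = (I / \<mu>) powr \<theta>"
      using mu I1 by (simp add: powr_divide powr_diff)
    finally show ?thesis by (simp add: \<mu>_def I_def \<theta>_def)
  qed
qed

definition hfun :: "'a::euclidean_space \<Rightarrow> real" where
  "hfun x = (\<Prod>b\<in>Basis. inverse (1 + (x \<bullet> b)^2))"

lemma hfun_pos: "0 < hfun x"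
  unfolding hfun_def by (intro prod_pos) (auto intro!: add_pos_nonneg)

lemma hfun_measurable[measurable]: "hfun \<in> borel_measurable borel"
  unfolding hfun_def by measurable

lemma hfun_nn_integral: "(\<integral>\<^sup>+x. ennreal (hfun (x::'a::euclidean_space)) \<partial>lborel) = ennreal (pi ^ DIM('a))"
proof -
  let ?f = "\<lambda>t::real. inverse (1 + t^2)"
  have int: "integrable lborel ?f"
    using integrable_inverse_1_plus_square unfolding set_integrable_def by (simp add: einterval_def)
  have val: "integral\<^sup>L lborel ?f = pi"
    using LBINT_inverse_1_plus_square unfolding interval_lebesgue_integral_def set_lebesgue_integral_def
    by (simp add: einterval_def)
  have one: "(\<integral>\<^sup>+t. ennreal (?f t) \<partial>lborel) = ennreal pi"
    using nn_integral_eq_integral[OF int] val by (simp add: add_pos_nonneg)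
  have eq: "ennreal (hfun x) = (\<Prod>b\<in>Basis. ennreal (?f (x \<bullet> b)))" for x :: 'a
  proof -
    have "\<forall>b\<in>Basis. 0 \<le> ?f (x \<bullet> b)" by (simp add: add_nonneg_nonneg)
    then show ?thesis unfolding hfun_def by (simp add: prod_ennreal)
  qed
  have "(\<integral>\<^sup>+x. ennreal (hfun (x::'a)) \<partial>lborel) = (\<integral>\<^sup>+x. (\<Prod>b\<in>Basis. ennreal (?f ((x::'a) \<bullet> b))) \<partial>lborel)"
    by (simp only: eq)
  also have "\<dots> = (\<Prod>b\<in>(Basis::'a set). (\<integral>\<^sup>+t. ennreal (?f t) \<partial>lborel))"
    by (rule nn_integral_lborel_prod[where f="\<lambda>b t. ennreal (?f t)"]) auto
  also have "\<dots> = ennreal (pi ^ DIM('a))"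
    by (simp add: one prod_ennreal ennreal_power)
  finally show ?thesis .
qed

lemma hfun_ln: "- ln (hfun (x::'a::euclidean_space)) \<le> 2 * DIM('a) * ln (exp 1 + norm x)"
proof -
  have pos: "0 < 1 + (x \<bullet> b)^2" for b by (simp add: add_pos_nonneg)
  have "ln (hfun x) = (\<Sum>b\<in>Basis. ln (inverse (1 + (x \<bullet> b)^2)))"
    unfolding hfun_def
  proof (rule ln_prod)
    fix b :: 'a
    show "inverse (1 + (x \<bullet> b)^2) \<noteq> 0" using pos[of b] by simp
  qed simp
  then have "- ln (hfun x) = (\<Sum>b\<in>Basis. ln (1 + (x \<bullet> b)^2))"
    using pos by (simp add: ln_inverse sum_negf)
  also have "\<dots> \<le> (\<Sum>b\<in>(Basis::'a set). 2 * ln (exp 1 + norm x))"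
  proof (rule sum_mono)
    fix b :: 'a assume b: "b \<in> Basis"
    have "\<bar>x \<bullet> b\<bar> \<le> norm x" using b by (rule Basis_le_norm)
    then have "(x \<bullet> b)^2 \<le> (norm x)^2" by (metis abs_le_square_iff abs_norm_cancel)
    moreover have "1 + (norm x)^2 \<le> (exp 1 + norm x)^2"
    proof -
      have e1: "1 \<le> exp (1::real)" by simp
      have "(exp 1 + norm x)^2 = (exp 1)^2 + 2*exp 1*norm x + (norm x)^2" by (simp add: power2_sum)
      moreover have "1 \<le> (exp (1::real))^2" using e1 by (simp add: one_le_power)
      moreover have "0 \<le> 2*exp 1*norm x" by simp
      ultimately show ?thesis by linarith
    qed
    ultimately have "1 + (x \<bullet> b)^2 \<le> (exp 1 + norm x)^2" by linarith
    then have "ln (1 + (x \<bullet> b)^2) \<le> ln ((exp 1 + norm x)^2)"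
      by (intro ln_mono) (auto intro!: add_pos_nonneg)
    also have "\<dots> = 2 * ln (exp 1 + norm x)"
      by (simp add: ln_realpow add_pos_nonneg)
    finally show "ln (1 + (x \<bullet> b)^2) \<le> 2 * ln (exp 1 + norm x)" .
  qed
  also have "\<dots> = 2 * DIM('a) * ln (exp 1 + norm x)" by simp
  finally show ?thesis .
qed

lemma pw_upper:
  fixes u q e P :: real
  assumes "0 < u" "q \<le> e" "e \<le> P"
  shows "u powr e \<le> u powr q + u powr P"
proof (cases "u \<le> 1")
  case True
  then have "u powr e \<le> u powr q" using assms by (intro powr_mono') auto
  then show ?thesis by (smt (verit) powr_ge_zero)
next
  case False
  then have "u powr e \<le> u powr P" using assms by (intro powr_mono) auto
  then show ?thesis by (smt (verit) powr_ge_zero)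
qed

lemma pw_lower_small:
  fixes t q e :: real
  assumes "0 < t" "q \<le> e" "0 \<le> q"
  shows "t powr q \<le> 1 * t powr e + 1"
proof (cases "t \<le> 1")
  case True
  then have "t powr q \<le> 1" using assms by (intro powr_le1) auto
  then show ?thesis by (smt (verit) powr_ge_zero)
next
  case False
  then have "t powr q \<le> t powr e" using assms by (intro powr_mono) auto
  then show ?thesis by simp
qed

lemma pw_lower_large:
  fixes t pm e Ci :: real and x :: "'a::euclidean_space"
  assumes t: "0 < t" and pm: "0 < pm" "pm \<le> e" and dec: "e - pm \<le> Ci / ln (exp 1 + norm x)"
    and Ci: "0 \<le> Ci"
  shows "t powr pm \<le> exp (2 * DIM('a) * Ci / pm) * t powr e + hfun x"
proof -
  define E where "E = exp (2 * DIM('a) * Ci / pm)"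
  define L where "L = ln (exp 1 + norm x)"
  have E1: "1 \<le> E" unfolding E_def using Ci pm by simp
  have L1: "1 \<le> L"
  proof -
    have "exp 1 \<le> exp 1 + norm x" by simp
    then have "ln (exp 1) \<le> L" unfolding L_def by (intro ln_mono) auto
    then show ?thesis by simp
  qed
  have h0: "0 < hfun x" by (rule hfun_pos)
  show ?thesis
  proof (cases "t \<le> 1")
    case False
    then have "t powr pm \<le> t powr e" using pm by (intro powr_mono) auto
    also have "\<dots> \<le> E * t powr e" using E1 by (simp add: mult_le_cancel_right1)
    finally show ?thesis unfolding E_def using h0 by linarith
  next
    case True
    show ?thesis
    proof (cases "t powr pm \<le> hfun x")
      case True
      have "0 \<le> E * t powr e" using E1 by simp
      then show ?thesis unfolding E_def[symmetric] using True by linarith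
    next
      case False
      then have hlt: "hfun x < t powr pm" by simp
      have tp: "0 < t powr pm" using t by simp
      have "ln (hfun x) < ln (t powr pm)" using ln_less_cancel_iff[OF h0 tp] hlt by blast
      also have "ln (t powr pm) = pm * ln t" using t by (simp add: ln_powr)
      finally have "- ln t < - ln (hfun x) / pm" using pm by (simp add: field_simps)
      also have "\<dots> \<le> 2 * DIM('a) * L / pm"
        using hfun_ln[of x] pm unfolding L_def by (intro divide_right_mono) auto
      finally have lt: "- ln t \<le> 2 * DIM('a) * L / pm" by simp
      have nlt: "0 \<le> - ln t" using \<open>t \<le> 1\<close> t by simp
      have "(e - pm) * (- ln t) \<le> (Ci / L) * (2 * DIM('a) * L / pm)"
        using dec lt nlt pm L1 Ci unfolding L_def[symmetric]
        by (intro mult_mono) auto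
      also have "\<dots> = 2 * DIM('a) * Ci / pm" using L1 by (simp add: field_simps)
      finally have ex: "(e - pm) * (- ln t) \<le> 2 * DIM('a) * Ci / pm" .
      have "t powr pm = t powr e * exp ((e - pm) * (- ln t))"
        using t by (simp add: powr_def exp_add[symmetric] algebra_simps)
      also have "\<dots> \<le> t powr e * E" unfolding E_def
        using ex by (intro mult_left_mono) auto
      finally show ?thesis using h0 unfolding E_def by (simp add: mult.commute)
    qed
  qed
qed

lemma log_holder_cube:
  fixes p :: "'a::euclidean_space \<Rightarrow> real" and l C :: real
  assumes LH: "\<forall>x y. x \<noteq> y \<and> dist x y \<le> 1/2 \<longrightarrow> \<bar>p x - p y\<bar> \<le> C / (- ln (dist x y))"
    and C: "0 < C" and l: "0 < l" "DIM('a) * l \<le> 1/2"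
    and xy: "x \<in> cube a l" "y \<in> cube a l"
  shows "\<bar>p x - p y\<bar> \<le> C / (- ln (DIM('a) * l))"
proof -
  have nl0: "0 < DIM('a) * l" using l by simp
  have lnneg: "0 < - ln (DIM('a) * l)"
    using l nl0 by (simp add: ln_less_zero_iff)
  show ?thesis
  proof (cases "x = y")
    case True
    have "0 \<le> C / (- ln (DIM('a) * l))" using C lnneg by (intro divide_nonneg_pos) auto
    then show ?thesis using True by simp
  next
    case False
    have d: "dist x y \<le> DIM('a) * l" using cube_dist[OF xy] .
    have d0: "0 < dist x y" using False by simp
    have "\<bar>p x - p y\<bar> \<le> C / (- ln (dist x y))" using LH False d l by auto
    also have "\<dots> \<le> C / (- ln (DIM('a) * l))"
    proof -
      have "ln (dist x y) \<le> ln (DIM('a) * l)" using d d0 by (intro ln_mono) auto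
      then have le: "- ln (DIM('a) * l) \<le> - ln (dist x y)" by simp
      then have "0 < - ln (dist x y)" using lnneg by linarith
      then have "0 < (- ln (dist x y)) * (- ln (DIM('a) * l))" using lnneg by (rule mult_pos_pos)
      then show ?thesis using le C by (intro divide_left_mono) auto
    qed
    finally show ?thesis .
  qed
qed

lemma mod_upper:
  fixes w p :: "'a::euclidean_space \<Rightarrow> real" and Q :: "'a set"
  assumes Q: "Q \<in> sets lborel" and wm: "w \<in> borel_measurable lborel" and pmeas: "p \<in> borel_measurable lborel"
    and ae: "AE x in lborel. x \<in> Q \<longrightarrow> 0 < w x \<and> q \<le> p x \<and> p x \<le> P"
    and r: "0 < r"
    and iq: "set_integrable lborel Q (\<lambda>x. w x powr q)"
    and iP: "set_integrable lborel Q (\<lambda>x. w x powr P)"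
  shows "(\<integral>\<^sup>+x. ennreal ((\<bar>indicator Q x * w x\<bar> / r) powr p x) \<partial>lborel)
          \<le> ennreal ((\<integral>x\<in>Q. w x powr q \<partial>lborel) / r powr q + (\<integral>x\<in>Q. w x powr P \<partial>lborel) / r powr P)"
proof -
  let ?g = "\<lambda>x. w x powr q / r powr q + w x powr P / r powr P"
  have ig: "set_integrable lborel Q ?g"
    using iq iP by (intro set_integral_add set_integrable_divide) auto
  have ig': "integrable lborel (\<lambda>x. indicator Q x * ?g x)"
    using ig unfolding set_integrable_def by simp
  have "(\<integral>\<^sup>+x. ennreal ((\<bar>indicator Q x * w x\<bar> / r) powr p x) \<partial>lborel)
        \<le> (\<integral>\<^sup>+x. ennreal (indicator Q x * ?g x) \<partial>lborel)"
  proof (rule nn_integral_mono_AE)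
    show "AE x in lborel. ennreal ((\<bar>indicator Q x * w x\<bar> / r) powr p x) \<le> ennreal (indicator Q x * ?g x)"
      using ae
    proof eventually_elim
      case (elim x)
      show ?case
      proof (cases "x \<in> Q")
        case True
        then have h: "0 < w x" "q \<le> p x" "p x \<le> P" using elim by auto
        have "(w x / r) powr p x \<le> (w x / r) powr q + (w x / r) powr P"
          using h r by (intro pw_upper) auto
        also have "\<dots> = ?g x" using h r by (simp add: powr_divide)
        finally have R: "(w x / r) powr p x \<le> ?g x" .
        have "ennreal ((\<bar>indicator Q x * w x\<bar> / r) powr p x) = ennreal ((w x / r) powr p x)"
          using True h by simp
        also have "\<dots> \<le> ennreal (indicator Q x * ?g x)" using R True by (intro ennreal_leI) simp
        finally show ?thesis .
      next
        case False
        then show ?thesis by simp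
      qed
    qed
  qed
  also have "\<dots> = ennreal (\<integral>x. indicator Q x * ?g x \<partial>lborel)"
    by (rule nn_integral_eq_integral[OF ig']) (auto intro!: AE_I2)
  also have "(\<integral>x. indicator Q x * ?g x \<partial>lborel) = (\<integral>x\<in>Q. ?g x \<partial>lborel)"
    unfolding set_lebesgue_integral_def by simp
  also have "\<dots> = (\<integral>x\<in>Q. w x powr q \<partial>lborel) / r powr q + (\<integral>x\<in>Q. w x powr P \<partial>lborel) / r powr P"
    using iq iP by (subst set_integral_add) auto
  finally show ?thesis .
qed

lemma mod_lower:
  fixes w p g :: "'a::euclidean_space \<Rightarrow> real" and Q :: "'a set"
  assumes Q: "Q \<in> sets lborel" and wm[measurable]: "w \<in> borel_measurable lborel"
    and pmeas[measurable]: "p \<in> borel_measurable lborel"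
    and gm[measurable]: "g \<in> borel_measurable lborel" and g0: "\<And>x. 0 \<le> g x"
    and ae: "AE x in lborel. x \<in> Q \<longrightarrow> 0 < w x \<and> (w x / r) powr q \<le> E * (w x / r) powr p x + g x"
    and G: "(\<integral>\<^sup>+x. ennreal (indicator Q x * g x) \<partial>lborel) \<le> ennreal G" and G0: "0 \<le> G"
    and E: "0 \<le> E" and r: "0 < r"
    and md: "(\<integral>\<^sup>+x. ennreal ((\<bar>indicator Q x * w x\<bar> / r) powr p x) \<partial>lborel) \<le> 1"
    and iq: "set_integrable lborel Q (\<lambda>x. w x powr q)"
  shows "(\<integral>x\<in>Q. w x powr q \<partial>lborel) / r powr q \<le> E + G"
proof -
  note Q[measurable]
  have iq': "integrable lborel (\<lambda>x. indicator Q x * (w x powr q / r powr q))"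
    using iq unfolding set_integrable_def by simp
  have "ennreal ((\<integral>x\<in>Q. w x powr q \<partial>lborel) / r powr q)
      = ennreal (\<integral>x. indicator Q x * (w x powr q / r powr q) \<partial>lborel)"
    unfolding set_lebesgue_integral_def by simp
  also have "\<dots> = (\<integral>\<^sup>+x. ennreal (indicator Q x * (w x powr q / r powr q)) \<partial>lborel)"
    by (rule nn_integral_eq_integral[OF iq', symmetric]) (auto intro!: AE_I2)
  also have "\<dots> \<le> (\<integral>\<^sup>+x. ennreal E * ennreal ((\<bar>indicator Q x * w x\<bar> / r) powr p x)
                        + ennreal (indicator Q x * g x) \<partial>lborel)"
  proof (rule nn_integral_mono_AE)
    show "AE x in lborel. ennreal (indicator Q x * (w x powr q / r powr q))
          \<le> ennreal E * ennreal ((\<bar>indicator Q x * w x\<bar> / r) powr p x) + ennreal (indicator Q x * g x)"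
      using ae
    proof eventually_elim
      case (elim x)
      show ?case
      proof (cases "x \<in> Q")
        case True
        then have h: "0 < w x" "(w x / r) powr q \<le> E * (w x / r) powr p x + g x" using elim by auto
        have "w x powr q / r powr q = (w x / r) powr q" using h r by (simp add: powr_divide)
        then have "indicator Q x * (w x powr q / r powr q) \<le> E * ((\<bar>indicator Q x * w x\<bar> / r) powr p x) + indicator Q x * g x"
          using True h by simp
        then have "ennreal (indicator Q x * (w x powr q / r powr q))
            \<le> ennreal (E * ((\<bar>indicator Q x * w x\<bar> / r) powr p x) + indicator Q x * g x)"
          by (rule ennreal_leI)
        also have "\<dots> = ennreal E * ennreal ((\<bar>indicator Q x * w x\<bar> / r) powr p x) + ennreal (indicator Q x * g x)"
          using E g0[of x] by (simp add: ennreal_plus ennreal_mult)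
        finally show ?thesis .
      next
        case False
        then show ?thesis by simp
      qed
    qed
  qed
  also have "\<dots> = ennreal E * (\<integral>\<^sup>+x. ennreal ((\<bar>indicator Q x * w x\<bar> / r) powr p x) \<partial>lborel)
                  + (\<integral>\<^sup>+x. ennreal (indicator Q x * g x) \<partial>lborel)"
    by (subst nn_integral_add) (auto simp: nn_integral_cmult)
  also have "\<dots> \<le> ennreal E * 1 + ennreal G"
    using md G by (intro add_mono mult_left_mono) auto
  also have "\<dots> = ennreal (E + G)" using E G0 by (simp add: ennreal_plus)
  finally have "ennreal ((\<integral>x\<in>Q. w x powr q \<partial>lborel) / r powr q) \<le> ennreal (E + G)" .
  moreover have "0 \<le> E + G" using E G0 by simp
  ultimately show ?thesis using ennreal_le_iff by blast
qed

lemma upper_main: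
  fixes w p :: "'a::euclidean_space \<Rightarrow> real" and Q :: "'a set"
  assumes Q: "Q \<in> sets lborel" "emeasure lborel Q < \<infinity>" "0 < measure lborel Q"
    and wm[measurable]: "w \<in> borel_measurable lborel" and pmeas[measurable]: "p \<in> borel_measurable lborel"
    and ae: "AE x in lborel. x \<in> Q \<longrightarrow> 0 < w x \<and> q \<le> p x \<and> p x \<le> P"
    and qs: "0 < pm" "pm \<le> q" "q \<le> P" "P \<le> pp" and s: "0 < s" "1 \<le> s * pm"
    and CR: "0 < CR"
    and RHi: "set_integrable lborel Q (\<lambda>x. (w x powr (1/s)) powr (s * pp))"
    and RHe: "((\<integral>x\<in>Q. (w x powr (1/s)) powr (s * pp) \<partial>lborel) / measure lborel Q) powr (1 / (s * pp))
        \<le> CR * ((\<integral>x\<in>Q. w x powr (1/s) \<partial>lborel) / measure lborel Q)"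
    and Kb: "measure lborel Q powr (1 - P / q) \<le> K" and K1: "1 \<le> K"
    and c2: "1 \<le> c2" "2 * K \<le> c2 powr pm" "CR powr s / c2 \<le> 1" "(CR powr s / c2) powr pm * K \<le> 1/2"
    and Ipos: "0 < (\<integral>x\<in>Q. w x powr q \<partial>lborel)"
  shows "(\<integral>\<^sup>+x. ennreal ((\<bar>indicator Q x * w x\<bar> / (c2 * (\<integral>x\<in>Q. w x powr q \<partial>lborel) powr (1/q))) powr p x) \<partial>lborel) \<le> 1"
proof -
  define \<mu> where "\<mu> = measure lborel Q"
  define v where "v = (\<lambda>x. w x powr (1/s))"
  define Iq where "Iq = (\<integral>x\<in>Q. w x powr q \<partial>lborel)"
  define IP where "IP = (\<integral>x\<in>Q. w x powr P \<partial>lborel)"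
  define A where "A = Iq powr (1/q)"
  have mu: "0 < \<mu>" using Q by (simp add: \<mu>_def)
  have vm[measurable]: "v \<in> borel_measurable lborel" unfolding v_def by measurable
  have v0: "\<And>x. 0 \<le> v x" unfolding v_def by simp
  have vp: "v x powr (s * e) = w x powr e" for x e unfolding v_def using s by (simp add: powr_powr)
  have pp0: "0 < pp" using qs by linarith
  have PM: "set_integrable lborel Q (\<lambda>x. w x powr e) \<and>
      (\<integral>x\<in>Q. w x powr e \<partial>lborel) / \<mu> \<le> ((\<integral>x\<in>Q. v x powr (s*pp) \<partial>lborel) / \<mu>) powr (e / pp)"
    if "0 < e" "e \<le> pp" for e
  proof -
    have i: "set_integrable lborel Q (\<lambda>x. v x powr (s*pp))" using RHi unfolding v_def .
    have a: "0 < s * e" "s * e \<le> s * pp" using that s by auto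
    note pm = power_mean[OF Q vm v0 a i]
    have "(s * e) / (s * pp) = e / pp" using s by simp
    then show ?thesis using pm unfolding vp \<mu>_def by simp
  qed
  have iq: "set_integrable lborel Q (\<lambda>x. w x powr q)" using PM[of q] qs by linarith
  have iP: "set_integrable lborel Q (\<lambda>x. w x powr P)" using PM[of P] qs by linarith
  define avt where "avt = (\<integral>x\<in>Q. v x powr (s*pp) \<partial>lborel) / \<mu>"
  define avv where "avv = (\<integral>x\<in>Q. v x \<partial>lborel) / \<mu>"
  have avt0: "0 \<le> avt" unfolding avt_def set_lebesgue_integral_def using mu
    by (intro divide_nonneg_pos integral_nonneg_AE AE_I2) auto
  have avv0: "0 \<le> avv" unfolding avv_def set_lebesgue_integral_def using mu v0
    by (intro divide_nonneg_pos integral_nonneg_AE AE_I2) auto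
  have Iq0: "0 < Iq" using Ipos by (simp add: Iq_def)
  have s1: "IP / \<mu> \<le> avt powr (P / pp)" using PM[of P] qs unfolding IP_def avt_def by linarith
  have "avt powr (1 / (s*pp)) \<le> CR * avv" using RHe unfolding avt_def avv_def v_def \<mu>_def .
  then have "(avt powr (1 / (s*pp))) powr (s * P) \<le> (CR * avv) powr (s * P)"
    using s qs by (intro powr_mono2) auto
  moreover have "(avt powr (1 / (s*pp))) powr (s * P) = avt powr (P / pp)"
    using s pp0 by (simp add: powr_powr)
  ultimately have s2: "avt powr (P / pp) \<le> (CR * avv) powr (s * P)" by simp
  have a3: "0 < (1::real)" "1 \<le> s * q" using s qs
    by (auto intro: order_trans[OF s(2)] mult_left_mono)
  have iv: "set_integrable lborel Q (\<lambda>x. v x powr (s * q))" using iq unfolding vp .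
  note pm3 = power_mean(2)[OF Q vm v0 a3 iv]
  have v1: "v x powr 1 = v x" for x using v0[of x] by simp
  have "avv \<le> ((\<integral>x\<in>Q. v x powr (s*q) \<partial>lborel) / \<mu>) powr (1 / (s*q))"
    using pm3 unfolding v1 avv_def \<mu>_def by simp
  also have "\<dots> = (Iq / \<mu>) powr (1 / (s*q))" unfolding vp Iq_def ..
  finally have s3: "avv \<le> (Iq / \<mu>) powr (1 / (s*q))" .
  have "(CR * avv) powr (s * P) = CR powr (s * P) * avv powr (s * P)"
    using CR avv0 by (simp add: powr_mult)
  also have "\<dots> \<le> CR powr (s * P) * ((Iq / \<mu>) powr (1 / (s*q))) powr (s * P)"
    using s3 avv0 s qs by (intro mult_left_mono powr_mono2) auto
  also have "((Iq / \<mu>) powr (1 / (s*q))) powr (s * P) = (Iq / \<mu>) powr (P / q)"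
    using s qs by (simp add: powr_powr)
  finally have s4: "IP / \<mu> \<le> CR powr (s * P) * (Iq / \<mu>) powr (P / q)"
    using s1 s2 by linarith
  have IPb: "IP \<le> CR powr (s * P) * \<mu> powr (1 - P / q) * A powr P"
  proof -
    have "IP \<le> \<mu> * (CR powr (s * P) * (Iq / \<mu>) powr (P / q))"
      using s4 mu by (simp add: divide_le_eq mult.commute)
    also have "(Iq / \<mu>) powr (P / q) = Iq powr (P / q) / \<mu> powr (P / q)"
      using Iq0 mu by (simp add: powr_divide)
    also have "Iq powr (P / q) = A powr P" unfolding A_def using qs by (simp add: powr_powr)
    also have "\<mu> * (CR powr (s * P) * (A powr P / \<mu> powr (P / q))) = CR powr (s * P) * (\<mu> / \<mu> powr (P / q)) * A powr P"
      by (simp add: field_simps)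
    also have "\<mu> / \<mu> powr (P / q) = \<mu> powr (1 - P / q)" using mu by (simp add: powr_diff)
    finally show ?thesis .
  qed
  have A0: "0 < A" unfolding A_def using Iq0 by simp
  have c20: "0 < c2" using c2 by simp
  have r0: "0 < c2 * A" using A0 c20 by simp
  note mu_up = mod_upper[OF Q(1) wm pmeas ae r0 iq iP]
  have t1: "Iq / (c2 * A) powr q = 1 / c2 powr q"
  proof -
    have "(c2 * A) powr q = c2 powr q * Iq" unfolding A_def using c20 Iq0 qs
      by (simp add: powr_mult powr_powr)
    then show ?thesis using Iq0 by simp
  qed
  have t1b: "1 / c2 powr q \<le> 1 / (2 * K)"
  proof -
    have "c2 powr pm \<le> c2 powr q" using c2 qs by (intro powr_mono) auto
    then have "2 * K \<le> c2 powr q" using c2 by linarith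
    moreover have "0 < 2 * K"
    proof -
      have "0 \<le> \<mu> powr (1 - P / q)" by simp
      moreover have "0 < \<mu> powr (1 - P / q)" using mu by simp
      ultimately show ?thesis using Kb unfolding \<mu>_def by linarith
    qed
    moreover have "0 < c2 powr q" using c20 by simp
    ultimately show ?thesis by (intro divide_left_mono) auto
  qed
  have K0: "0 < K" using Kb mu unfolding \<mu>_def by (smt (verit) powr_gt_zero)
  have t2: "IP / (c2 * A) powr P \<le> 1 / 2"
  proof -
    have "IP / (c2 * A) powr P \<le> CR powr (s * P) * \<mu> powr (1 - P / q) * A powr P / (c2 * A) powr P"
      using IPb r0 by (intro divide_right_mono) auto
    also have "\<dots> = (CR powr s / c2) powr P * \<mu> powr (1 - P / q)"
      using c20 A0 CR by (simp add: powr_mult powr_divide powr_powr field_simps)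
    also have "\<dots> \<le> (CR powr s / c2) powr pm * K"
    proof (rule mult_mono)
      show "(CR powr s / c2) powr P \<le> (CR powr s / c2) powr pm"
        using c2 qs c20 by (intro powr_mono') auto
      show "\<mu> powr (1 - P / q) \<le> K" using Kb unfolding \<mu>_def .
    qed auto
    also have "\<dots> \<le> 1/2" using c2 by simp
    finally show ?thesis .
  qed
  have "1 / (2 * K) \<le> 1 / 2" using K1 by (intro divide_left_mono) auto
  then have "Iq / (c2 * A) powr q + IP / (c2 * A) powr P \<le> 1" using t1 t1b t2 by linarith
  then have "ennreal (Iq / (c2 * A) powr q + IP / (c2 * A) powr P) \<le> 1"
    by (simp add: ennreal_le_1)
  with mu_up show ?thesis unfolding Iq_def IP_def A_def by (rule order_trans)
qed

lemma mu_powr: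
  fixes l q P :: real and n :: nat
  assumes "0 < l" "0 < q"
  shows "(l ^ n) powr (1 - P / q) = exp ((P - q) / q * n * (- ln l))"
proof -
  have "(l ^ n) powr (1 - P / q) = exp ((1 - P / q) * ln (l ^ n))"
    using assms by (simp add: powr_def)
  also have "ln (l ^ n) = n * ln l" using assms by (simp add: ln_realpow)
  also have "(1 - P / q) * (n * ln l) = (P - q) / q * n * (- ln l)"
    using assms by (simp add: field_simps)
  finally show ?thesis .
qed

lemma choose_P:
  fixes p :: "'a::euclidean_space \<Rightarrow> real" and l pm pp q Clog :: real and a :: 'a
  assumes l: "0 < l"
    and LH: "\<forall>x y. x \<noteq> y \<and> dist x y \<le> 1/2 \<longrightarrow> \<bar>p x - p y\<bar> \<le> Clog / (- ln (dist x y))"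
    and Clog: "0 < Clog"
    and aepp: "AE x in lborel. p x \<le> pp"
    and q: "q = (if l > 1 then pm else ess_inf_on p (cube a l))"
    and qb: "0 < pm" "pm \<le> q" "q \<le> pp"
    and lo: "\<And>c. l \<le> 1 \<Longrightarrow> (AE x in lborel. x \<in> cube a l \<longrightarrow> c \<le> p x) \<Longrightarrow> c \<le> q"
  shows "\<exists>P. q \<le> P \<and> P \<le> pp \<and> (AE x in lborel. x \<in> cube a l \<longrightarrow> p x \<le> P) \<and>
     (l ^ DIM('a)) powr (1 - P / q) \<le>
       max 1 (max (exp (DIM('a) * Clog * (1 + ln (DIM('a)) / ln 2) / pm))
                  (exp (DIM('a) * (pp - pm) / pm * ln (2 * DIM('a)))))"
proof -
  define n where "n = real DIM('a)"
  have n1: "1 \<le> n" unfolding n_def by (simp add: DIM_positive Suc_leI)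
  define K where "K = max 1 (max (exp (DIM('a) * Clog * (1 + ln (DIM('a)) / ln 2) / pm))
                  (exp (DIM('a) * (pp - pm) / pm * ln (2 * DIM('a)))))"
  have q0: "0 < q" using qb by linarith
  consider (big) "1 < l" | (small) "l \<le> 1" "n * l \<le> 1/2" | (mid) "l \<le> 1" "1/2 < n * l" by linarith
  then show ?thesis
  proof cases
    case big
    have "(l ^ DIM('a)) powr (1 - pp / q) = exp ((pp - q) / q * DIM('a) * (- ln l))"
      using l q0 by (rule mu_powr)
    also have "\<dots> \<le> exp 0"
    proof -
      have "0 \<le> (pp - q) / q" using qb q0 by simp
      moreover have "0 \<le> ln l" using big by simp
      ultimately have "0 \<le> (pp - q) / q * DIM('a) * ln l" by (intro mult_nonneg_nonneg) auto
      then show ?thesis by simp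
    qed
    also have "\<dots> \<le> K" unfolding K_def by simp
    finally show ?thesis using qb aepp unfolding K_def by (intro exI[of _ pp]) auto
  next
    case small
    define \<delta> where "\<delta> = Clog / (- ln (n * l))"
    have nl0: "0 < n * l" using n1 l by simp
    have ln2: "ln 2 \<le> - ln (n * l)"
    proof -
      have "ln (n * l) \<le> ln (1/2)" using small nl0 by (intro ln_mono) auto
      then show ?thesis by (simp add: ln_div)
    qed
    have ln2p: "0 < ln (2::real)" by simp
    have nlp0: "0 < - ln (n * l)" using ln2 ln2p by linarith
    have d0: "0 \<le> \<delta>" unfolding \<delta>_def using Clog nlp0 by (intro divide_nonneg_pos) auto
    have upx: "p x \<le> q + \<delta>" if x: "x \<in> cube a l" for x
    proof -
      have "p x - \<delta> \<le> q"
      proof (rule lo)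
        show "l \<le> 1" using small by simp
        show "AE y in lborel. y \<in> cube a l \<longrightarrow> p x - \<delta> \<le> p y"
        proof (intro AE_I2 impI)
          fix y assume y: "y \<in> cube a l"
          have "\<bar>p x - p y\<bar> \<le> Clog / (- ln (DIM('a) * l))"
            using log_holder_cube[OF LH Clog l(1) _ x y] small unfolding n_def by simp
          then show "p x - \<delta> \<le> p y" unfolding \<delta>_def n_def by linarith
        qed
      qed
      then show ?thesis by linarith
    qed
    define P where "P = min (q + \<delta>) pp"
    have P1: "q \<le> P" "P \<le> pp" "P - q \<le> \<delta>" using qb d0 by (auto simp: P_def)
    have aeP: "AE x in lborel. x \<in> cube a l \<longrightarrow> p x \<le> P"
      using aepp by eventually_elim (auto simp: P_def upx)
    have "(l ^ DIM('a)) powr (1 - P / q) = exp ((P - q) / q * DIM('a) * (- ln l))"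
      using l q0 by (rule mu_powr)
    also have "\<dots> \<le> exp (DIM('a) * Clog * (1 + ln (DIM('a)) / ln 2) / pm)"
    proof -
      have lnl: "- ln l = - ln (n * l) + ln n" using n1 l by (simp add: ln_mult)
      have nlp: "0 < - ln (n * l)" using ln2 ln2p by linarith
      have lnn: "0 \<le> ln n" using n1 by simp
      have "- ln l \<ge> 0" using small n1 l
        by (smt (verit, ccfv_SIG) ln_le_zero_iff)
      have "(P - q) / q \<le> \<delta> / pm"
      proof -
        have "(P - q) / q \<le> (P - q) / pm" using P1 qb by (intro divide_left_mono) auto
        also have "\<dots> \<le> \<delta> / pm" using P1 qb by (intro divide_right_mono) auto
        finally show ?thesis .
      qed
      moreover have "0 \<le> n * (- ln l)" using \<open>- ln l \<ge> 0\<close> n1 by (intro mult_nonneg_nonneg) auto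
      ultimately have e1: "(P - q) / q * (n * (- ln l)) \<le> \<delta> / pm * (n * (- ln l))"
        by (rule mult_right_mono)
      have "\<delta> * (- ln l) = Clog * (1 + ln n / (- ln (n * l)))"
        unfolding \<delta>_def lnl using nlp by (simp add: field_simps)
      also have "\<dots> \<le> Clog * (1 + ln n / ln 2)"
      proof -
        have "ln (n * l) < 0" using nlp0 by linarith
        then have "ln (n * l) * ln 2 < 0" using ln2p by (rule mult_neg_pos)
        then show ?thesis
          using Clog lnn ln2 ln2p by (intro mult_left_mono add_left_mono divide_left_mono) auto
      qed
      finally have e2: "\<delta> * (- ln l) \<le> Clog * (1 + ln n / ln 2)" .
      have e3: "\<delta> / pm * (n * (- ln l)) = n / pm * (\<delta> * (- ln l))" by simp
      have e4: "n / pm * (\<delta> * (- ln l)) \<le> n / pm * (Clog * (1 + ln n / ln 2))"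
        using e2 n1 qb by (intro mult_left_mono) auto
      have "(P - q) / q * (n * (- ln l)) \<le> n / pm * (Clog * (1 + ln n / ln 2))"
        using e1 e4 unfolding e3 by linarith
      also have "\<dots> = n * Clog * (1 + ln n / ln 2) / pm" by simp
      finally have "(P - q) / q * (n * (- ln l)) \<le> n * Clog * (1 + ln n / ln 2) / pm" .
      then show ?thesis unfolding n_def by (simp add: mult.assoc mult.commute mult.left_commute)
    qed
    also have "\<dots> \<le> K" unfolding K_def by simp
    finally show ?thesis using P1 aeP unfolding K_def by (intro exI[of _ P]) auto
  next
    case mid
    have "(l ^ DIM('a)) powr (1 - pp / q) = exp ((pp - q) / q * DIM('a) * (- ln l))"
      using l q0 by (rule mu_powr)
    also have "\<dots> \<le> exp (DIM('a) * (pp - pm) / pm * ln (2 * DIM('a)))"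
    proof -
      have "1 / (2 * n) < l" using mid n1 by (simp add: field_simps)
      then have "ln (1 / (2 * n)) \<le> ln l" using n1 by (intro ln_mono) auto
      then have lnl: "- ln l \<le> ln (2 * n)" using n1 by (simp add: ln_div)
      have lnl0: "0 \<le> - ln l" using mid l by simp
      have "(pp - q) / q \<le> (pp - pm) / pm"
      proof -
        have "(pp - q) / q \<le> (pp - q) / pm" using qb by (intro divide_left_mono) auto
        also have "\<dots> \<le> (pp - pm) / pm" using qb by (intro divide_right_mono) auto
        finally show ?thesis .
      qed
      moreover have "0 \<le> (pp - q) / q" using qb q0 by simp
      ultimately have "(pp - q) / q * (- ln l) \<le> (pp - pm) / pm * ln (2 * n)"
        using lnl lnl0 by (intro mult_mono) auto
      then have "(pp - q) / q * (- ln l) * n \<le> (pp - pm) / pm * ln (2 * n) * n"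
        using n1 by (intro mult_right_mono) auto
      then show ?thesis unfolding n_def by (simp add: mult.assoc mult.commute mult.left_commute)
    qed
    also have "\<dots> \<le> K" unfolding K_def by simp
    finally show ?thesis using qb aepp unfolding K_def by (intro exI[of _ pp]) auto
  qed
qed

theorem corollary3p7:
  fixes p w :: "'a::euclidean_space \<Rightarrow> real" and s :: real
  assumes "P_log_with p (p_minus p)"
    and "s > 1 / p_minus p"
    and "weight w"
    and "\<exists>C \<gamma>::real. AE x in lborel. w x \<le> C * (1 + norm x) powr \<gamma>"
    and "RH (s * p_plus p) (\<lambda>x. w x powr (1/s))"
  shows "\<exists>c1>0. \<exists>c2>0. \<forall>a l. l > 0 \<longrightarrow>
     (let q = (if l > 1 then p_minus p else ess_inf_on p (cube a l));
          A = (\<integral>x\<in>cube a l. w x powr q \<partial>lborel) powr (1/q)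
      in c1 * A \<le> lp_w_norm p w (indicator (cube a l)) \<and>
         lp_w_norm p w (indicator (cube a l)) \<le> c2 * A)"
proof -
  define pm where "pm = p_minus p"
  define pp where "pp = p_plus p"
  have PL: "P_log_with p pm" using assms(1) unfolding pm_def .
  then have pmeas[measurable]: "p \<in> borel_measurable lborel"
    and pm0: "0 < pm" and pmpp: "pm \<le> pp"
    unfolding P_log_with_def pm_def pp_def by auto
  from PL obtain m where m: "AE x in lborel. m \<le> p x" unfolding P_log_with_def by auto
  from PL obtain M where M: "AE x in lborel. p x \<le> M" unfolding P_log_with_def by auto
  from PL obtain Clog where Clog: "0 < Clog"
    and LH: "\<forall>x y. x \<noteq> y \<and> dist x y \<le> 1/2 \<longrightarrow> \<bar>p x - p y\<bar> \<le> Clog / (- ln (dist x y))"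
    unfolding P_log_with_def by auto
  from PL obtain Ci where Ci: "0 < Ci"
    and dec: "\<forall>x. \<bar>p x - pm\<bar> \<le> Ci / ln (exp 1 + norm x)"
    unfolding P_log_with_def by auto
  have Usets: "UNIV \<in> sets (lborel::'a measure)" by simp
  have Unn: "emeasure lborel (UNIV::'a set) \<noteq> 0" by simp
  have aepm: "AE x in lborel. pm \<le> p x"
    using essinf_props(1)[OF Usets Unn m M] unfolding pm_def by simp
  have aepp: "AE x in lborel. p x \<le> pp"
    using esssup_props[OF m M] unfolding pp_def .
  from assms(3) have wm[measurable]: "w \<in> borel_measurable lborel" and aew: "AE x in lborel. 0 < w x"
    unfolding weight_def by auto
  from assms(5) obtain CR where CR: "0 < CR" and RHall: "\<And>a l. l > 0 \<Longrightarrow>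
      set_integrable lborel (cube a l) (\<lambda>x. (w x powr (1/s)) powr (s * pp)) \<and>
      ((\<integral>x\<in>cube a l. (w x powr (1/s)) powr (s * pp) \<partial>lborel) / measure lborel (cube a l)) powr (1/(s * pp))
        \<le> CR * ((\<integral>x\<in>cube a l. w x powr (1/s) \<partial>lborel) / measure lborel (cube a l))"
    unfolding RH_def pp_def by blast
  have s0: "0 < s" using assms(2) pm0 unfolding pm_def[symmetric]
    by (smt (verit) divide_pos_pos)
  have spm: "1 \<le> s * pm" using assms(2) pm0 unfolding pm_def[symmetric]
    by (simp add: field_simps)
  define K where "K = max 1 (max (exp (DIM('a) * Clog * (1 + ln (DIM('a)) / ln 2) / pm))
                  (exp (DIM('a) * (pp - pm) / pm * ln (2 * DIM('a)))))"
  define c2 where "c2 = max 1 (CR powr s) * (2 * K) powr (1 / pm)"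
  define E0 where "E0 = exp (2 * DIM('a) * Ci / pm)"
  define B0 where "B0 = E0 + pi ^ DIM('a)"
  define c1 where "c1 = 1 / B0 powr (1 / pm)"
  have K1: "1 \<le> K" unfolding K_def by simp
  have E01: "1 \<le> E0" unfolding E0_def using Ci pm0 by simp
  have pin: "1 \<le> pi ^ DIM('a)" using pi_gt3 by (intro one_le_power) simp
  have B01: "1 \<le> B0" unfolding B0_def using E01 pin by simp
  have c10: "0 < c1" unfolding c1_def using B01 by simp
  have c2facts: "1 \<le> c2" "2 * K \<le> c2 powr pm" "CR powr s / c2 \<le> 1" "(CR powr s / c2) powr pm * K \<le> 1/2"
  proof -
    define X where "X = max 1 (CR powr s)"
    define Y where "Y = (2 * K) powr (1 / pm)"
    have X1: "1 \<le> X" unfolding X_def by simp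
    have CX: "CR powr s \<le> X" unfolding X_def by simp
    have Y1: "1 \<le> Y" unfolding Y_def using K1 pm0 by (intro ge_one_powr_ge_zero) auto
    have Ypm: "Y powr pm = 2 * K" unfolding Y_def using K1 pm0 by (simp add: powr_powr)
    have c2XY: "c2 = X * Y" unfolding c2_def X_def Y_def ..
    show "1 \<le> c2" unfolding c2XY using X1 Y1 by (metis mult_le_cancel_right1 order_trans zero_le_one mult_right_mono mult_1)
    have "X powr pm * Y powr pm \<ge> 1 * Y powr pm"
      using X1 pm0 by (intro mult_right_mono ge_one_powr_ge_zero) auto
    then show "2 * K \<le> c2 powr pm" unfolding c2XY using X1 Y1 Ypm by (simp add: powr_mult)
    have r1: "CR powr s / c2 \<le> 1 / Y"
      unfolding c2XY using CX X1 Y1 by (simp add: field_simps)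
    then show "CR powr s / c2 \<le> 1" using Y1 by (smt (verit) divide_le_eq_1)
    have "(CR powr s / c2) powr pm \<le> (1 / Y) powr pm"
      using r1 pm0 \<open>1 \<le> c2\<close> by (intro powr_mono2) auto
    also have "\<dots> = 1 / (2 * K)" using Ypm Y1 by (simp add: powr_divide)
    finally have "(CR powr s / c2) powr pm * K \<le> 1 / (2 * K) * K" using K1 by (intro mult_right_mono) auto
    also have "\<dots> = 1/2" using K1 by simp
    finally show "(CR powr s / c2) powr pm * K \<le> 1/2" .
  qed
  have c20: "0 < c2" using c2facts by simp
  have main: "let q' = (if l > 1 then p_minus p else ess_inf_on p (cube a l));
          A' = (\<integral>x\<in>cube a l. w x powr q' \<partial>lborel) powr (1/q')
      in c1 * A' \<le> lp_w_norm p w (indicator (cube a l)) \<and>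
         lp_w_norm p w (indicator (cube a l)) \<le> c2 * A'" if l: "0 < l" for a :: 'a and l :: real
  proof -
    define Q where "Q = cube a l"
    define q where "q = (if l > 1 then pm else ess_inf_on p Q)"
    define A where "A = (\<integral>x\<in>Q. w x powr q \<partial>lborel) powr (1/q)"
    have Qs[measurable]: "Q \<in> sets lborel" unfolding Q_def by (rule cube_sets)
    have Qe: "emeasure lborel Q = ennreal (l ^ DIM('a))" unfolding Q_def using l by (simp add: cube_emeasure)
    have Qm: "measure lborel Q = l ^ DIM('a)" unfolding Q_def using l by (simp add: cube_measure)
    have Qfin: "emeasure lborel Q < \<infinity>" using Qe by simp
    have Qpos: "0 < measure lborel Q" using Qm l by simp
    have Qnn: "emeasure lborel Q \<noteq> 0" using Qe l by simp
    have qfacts: "(AE x in lborel. x \<in> Q \<longrightarrow> q \<le> p x) \<and> pm \<le> q \<and> q \<le> pp"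
    proof (cases "1 < l")
      case True
      then show ?thesis using aepm pmpp unfolding q_def by (auto elim: eventually_mono)
    next
      case False
      note E = essinf_props[OF Qs Qnn aepm aepp]
      have "AE x in lborel. x \<in> Q \<longrightarrow> pm \<le> p x" using aepm by (auto elim: eventually_mono)
      then have "pm \<le> ess_inf_on p Q" by (rule E(2))
      then show ?thesis using False E(1) E(3) unfolding q_def by auto
    qed
    have q0: "0 < q" using qfacts pm0 by linarith
    have lo: "c \<le> q" if "l \<le> 1" "AE x in lborel. x \<in> cube a l \<longrightarrow> c \<le> p x" for c
      using essinf_props(2)[OF Qs Qnn aepm aepp, of c] that unfolding q_def Q_def by auto
    have exP: "\<exists>P. q \<le> P \<and> P \<le> pp \<and> (AE x in lborel. x \<in> cube a l \<longrightarrow> p x \<le> P) \<and>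
     (l ^ DIM('a)) powr (1 - P / q) \<le> K"
      unfolding K_def
    proof (rule choose_P[OF l LH Clog aepp])
      show "q = (if 1 < l then pm else ess_inf_on p (cube a l))" unfolding q_def Q_def ..
    qed (use qfacts pm0 lo in auto)
    then obtain P where P: "q \<le> P" "P \<le> pp" "AE x in lborel. x \<in> Q \<longrightarrow> p x \<le> P"
      "measure lborel Q powr (1 - P / q) \<le> K"
      unfolding Q_def[symmetric] Qm[symmetric] by blast
    have RHQ: "set_integrable lborel Q (\<lambda>x. (w x powr (1/s)) powr (s * pp))"
      and RHe: "((\<integral>x\<in>Q. (w x powr (1/s)) powr (s * pp) \<partial>lborel) / measure lborel Q) powr (1/(s * pp))
        \<le> CR * ((\<integral>x\<in>Q. w x powr (1/s) \<partial>lborel) / measure lborel Q)"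
      using RHall[OF l, of a] unfolding Q_def by auto
    have iqQ: "set_integrable lborel Q (\<lambda>x. w x powr q)"
    proof -
      have vm: "(\<lambda>x. w x powr (1/s)) \<in> borel_measurable lborel" by measurable
      have ab: "0 < s * q" "s * q \<le> s * pp" using s0 q0 qfacts by auto
      have "set_integrable lborel Q (\<lambda>x. (w x powr (1/s)) powr (s * q))"
        by (rule power_mean(1)[OF Qs Qfin Qpos vm _ ab RHQ]) simp
      moreover have "(w x powr (1/s)) powr (s*q) = w x powr q" for x using s0 by (simp add: powr_powr)
      ultimately show ?thesis by simp
    qed
    define Iq where "Iq = (\<integral>x\<in>Q. w x powr q \<partial>lborel)"
    have Iq0: "0 \<le> Iq" unfolding Iq_def set_lebesgue_integral_def by (intro integral_nonneg_AE AE_I2) auto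
    have Ipos: "0 < Iq"
    proof (rule ccontr)
      assume "\<not> 0 < Iq"
      then have "Iq = 0" using Iq0 by simp
      then have "AE x in lborel. indicator Q x *\<^sub>R w x powr q = 0"
        using iqQ unfolding Iq_def set_lebesgue_integral_def set_integrable_def
        by (subst integral_nonneg_eq_0_iff_AE[symmetric]) auto
      then have "AE x in lborel. x \<in> Q \<longrightarrow> False" using aew
        by eventually_elim (auto simp: indicator_def)
      then show False using ae_not_null[OF Qs Qnn] by blast
    qed
    define S where "S = {r::real. r > 0 \<and> (\<integral>\<^sup>+x. ennreal ((\<bar>indicator Q x * w x\<bar> / r) powr p x) \<partial>lborel) \<le> 1}"
    have normS: "lp_w_norm p w (indicator Q) = Inf S" unfolding lp_w_norm_def lp_norm_def S_def ..
    have A0: "0 < A" unfolding A_def using Ipos Iq_def by simp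
    have aeq: "AE x in lborel. x \<in> Q \<longrightarrow> q \<le> p x" using qfacts by blast
    have aeQ: "AE x in lborel. x \<in> Q \<longrightarrow> 0 < w x \<and> q \<le> p x \<and> p x \<le> P"
      using aew aeq P(3) by eventually_elim auto
    have qb: "0 < pm" "pm \<le> q" "q \<le> P" "P \<le> pp" using pm0 qfacts P by auto
    have mainup: "(\<integral>\<^sup>+x. ennreal ((\<bar>indicator Q x * w x\<bar> / (c2 * A)) powr p x) \<partial>lborel) \<le> 1"
      unfolding A_def
      by (rule upper_main[OF Qs Qfin Qpos wm pmeas aeQ qb s0 spm CR RHQ RHe P(4) K1 c2facts])
         (use Ipos Iq_def in simp)
    have inS: "c2 * A \<in> S" unfolding S_def using mainup c20 A0 by simp
    have bdd: "bdd_below S" unfolding S_def by (rule bdd_belowI[of _ 0]) auto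
    have up: "lp_w_norm p w (indicator Q) \<le> c2 * A" using cInf_lower[OF inS bdd] normS by simp
    have lowr: "c1 * A \<le> r" if "r \<in> S" for r
    proof -
      from that have r0: "0 < r"
        and md: "(\<integral>\<^sup>+x. ennreal ((\<bar>indicator Q x * w x\<bar> / r) powr p x) \<partial>lborel) \<le> 1"
        unfolding S_def by auto
      have hm: "hfun \<in> borel_measurable lborel" by simp
      have h0: "\<And>x. 0 \<le> hfun x" using hfun_pos less_imp_le by blast
      have bound: "Iq / r powr q \<le> B0"
      proof (cases "1 < l")
        case True
        then have qpm: "q = pm" unfolding q_def by simp
        have aeL: "AE x in lborel. x \<in> Q \<longrightarrow> 0 < w x \<and> (w x / r) powr q \<le> E0 * (w x / r) powr p x + hfun x"
          using aew aepm
        proof eventually_elim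
          case (elim x)
          show ?case
          proof
            assume "x \<in> Q"
            have "p x - pm \<le> Ci / ln (exp 1 + norm x)" using dec[rule_format, of x] by linarith
            then have "(w x / r) powr pm \<le> exp (2 * DIM('a) * Ci / pm) * (w x / r) powr p x + hfun x"
              using elim r0 pm0 Ci by (intro pw_lower_large) auto
            then show "0 < w x \<and> (w x / r) powr q \<le> E0 * (w x / r) powr p x + hfun x"
              using elim qpm unfolding E0_def by simp
          qed
        qed
        have G: "(\<integral>\<^sup>+x. ennreal (indicator Q x * hfun x) \<partial>lborel) \<le> ennreal (pi ^ DIM('a))"
        proof -
          have "(\<integral>\<^sup>+x. ennreal (indicator Q x * hfun x) \<partial>lborel) \<le> (\<integral>\<^sup>+x. ennreal (hfun (x::'a)) \<partial>lborel)"
            using h0 by (intro nn_integral_mono ennreal_leI) (auto simp: indicator_def)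
          then show ?thesis using hfun_nn_integral[where 'a='a] by simp
        qed
        have "Iq / r powr q \<le> E0 + pi ^ DIM('a)" unfolding Iq_def
          by (rule mod_lower[OF Qs wm pmeas hm h0 aeL G _ _ r0 md iqQ]) (use E01 in auto)
        then show ?thesis unfolding B0_def .
      next
        case False
        have g1: "(\<lambda>x::'a. 1::real) \<in> borel_measurable lborel" by simp
        have aeS: "AE x in lborel. x \<in> Q \<longrightarrow> 0 < w x \<and> (w x / r) powr q \<le> 1 * (w x / r) powr p x + 1"
          using aew aeq
        proof eventually_elim
          case (elim x)
          show ?case
          proof
            assume x: "x \<in> Q"
            have "(w x / r) powr q \<le> 1 * (w x / r) powr p x + 1"
              using elim x r0 q0 by (intro pw_lower_small) auto
            then show "0 < w x \<and> (w x / r) powr q \<le> 1 * (w x / r) powr p x + 1" using elim x by simp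
          qed
        qed
        have G: "(\<integral>\<^sup>+x. ennreal (indicator Q x * 1) \<partial>lborel) \<le> ennreal 1"
        proof -
          have "(\<integral>\<^sup>+x. ennreal (indicator Q x * 1) \<partial>lborel) = emeasure lborel Q"
            using Qs by (simp add: ennreal_indicator)
          also have "\<dots> = ennreal (l ^ DIM('a))" by (rule Qe)
          also have "\<dots> \<le> ennreal 1" using False l by (intro ennreal_leI power_le_one) auto
          finally show ?thesis .
        qed
        have "Iq / r powr q \<le> 1 + 1" unfolding Iq_def
          by (rule mod_lower[OF Qs wm pmeas g1 _ aeS G _ _ r0 md iqQ]) auto
        then show ?thesis unfolding B0_def using E01 pin by linarith
      qed
      then have "Iq \<le> B0 * r powr q" using r0 by (simp add: divide_le_eq)
      then have "Iq powr (1/q) \<le> (B0 * r powr q) powr (1/q)" using Iq0 q0 by (intro powr_mono2) auto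
      also have "\<dots> = B0 powr (1/q) * r" using B01 r0 q0 by (simp add: powr_mult powr_powr)
      also have "\<dots> \<le> B0 powr (1/pm) * r"
      proof -
        have "1/q \<le> 1/pm" using qfacts pm0 by (intro divide_left_mono) auto
        then have "B0 powr (1/q) \<le> B0 powr (1/pm)" using B01 by (intro powr_mono) auto
        then show ?thesis using r0 by (intro mult_right_mono) auto
      qed
      finally have "A \<le> B0 powr (1/pm) * r" unfolding A_def Iq_def .
      then show ?thesis unfolding c1_def using B01 by (simp add: field_simps)
    qed
    have Sne: "S \<noteq> {}" using inS by blast
    have low: "c1 * A \<le> lp_w_norm p w (indicator Q)"
      unfolding normS by (rule cInf_greatest[OF Sne]) (rule lowr)
    show ?thesis
      using up low unfolding Let_def A_def q_def Q_def pm_def by simp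
  qed
  show ?thesis using c10 c20 main by blast
qed

end
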